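(* Let $L>0$, $\rho\in C([0,L];[0,\infty))$ with $\rho(0)=0$, $\rho>0$ on $(0,L]$ and $V(0,0):=\int_0^L\rho(\zeta)/\zeta\,d\zeta<\infty$; let $V(r,z)=\int_0^L\rho(\zeta)((\zeta-z)^2+r^2)^{-1/2}d\zeta$. Let $c>V(0,0)$ and let $r_c:[0,z_2]\to[0,\infty)$ be the contour function of the level set $\{V=c\}$, i.e. the function with $r_c(0)=r_c(z_2)=0$, $r_c>0$ on $(0,z_2)$ and $\{(r,z): r\ge0,\ (r>0\text{ or }z\notin[0,L]),\ V(r,z)=c\}\cup\{(0,0)\}=\{(r_c(z),z):z\in[0,z_2]\}$. Let $0<\alpha<\frac{c-V(0,0)}{2}<\beta$. (a) If $\rho$ is monotonically increasing on some $[0,b]$, $b>0$, and $\delta\in(0,1)$, then there exists $z_0\in(0,L]$ such that $\exp(-\beta/\rho((1-\delta)z))<r_c(z)<\exp(-\alpha/\rho((1+\delta)z))$ for all $z\in(0,z_0]$. (b) If $\rho$ is Dini continuous on some $[0,b]$, $b\in(0,L]$, then there exists $z_0\in(0,L]$ such that $e^{-\beta/\rho(z)}<r_c(z)<e^{-\alpha/\rho(z)}$ for all $z\in(0,z_0]$.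
   Context: For continuous $f:[a,b]\to\mathbb{R}$, $\omega_f(t)=\sup\{|f(x)-f(y)|:x,y\in[a,b],|x-y|\le t\}$, and $f$ is Dini continuous if $\int_0^1\omega_f(t)/t\,dt<\infty$. The existence of the contour function $r_c$ (continuous on $[0,z_2]$, with $z_2>L$) is known. *)

theory Defs
  imports "HOL-Analysis.Analysis"
begin

definition potential :: "(real \<Rightarrow> real) \<Rightarrow> real \<Rightarrow> real \<Rightarrow> real \<Rightarrow> real" where
  "potential \<rho> L r z = integral {0..L} (\<lambda>\<zeta>. \<rho> \<zeta> / sqrt ((\<zeta> - z)^2 + r^2))"

definition modulus_of_continuity :: "real \<Rightarrow> real \<Rightarrow> (real \<Rightarrow> real) \<Rightarrow> real \<Rightarrow> real" where
  "modulus_of_continuity a b f t =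
     Sup {\<bar>f x - f y\<bar> | x y. x \<in> {a..b} \<and> y \<in> {a..b} \<and> \<bar>x - y\<bar> \<le> t}"

text \<open>Dini continuity: f continuous on [a,b] and int_0^1 omega_f(t)/t dt finite
  (the integrand is nonnegative and measurable, so integrability is finiteness).\<close>
definition dini_continuous_on :: "real \<Rightarrow> real \<Rightarrow> (real \<Rightarrow> real) \<Rightarrow> bool" where
  "dini_continuous_on a b f \<longleftrightarrow> continuous_on {a..b} f \<and>
     (\<lambda>t. modulus_of_continuity a b f t / t) integrable_on {0..1}"

end

theory Submission
  imports Defs
begin
definition G :: "real \<Rightarrow> real \<Rightarrow> real \<Rightarrow> real" where
  "G z r x = ln (x - z + sqrt ((x - z)^2 + r^2))"

lemma sq_gt: "(r::real) > 0 \<Longrightarrow> \<bar>u\<bar> < sqrt (u^2 + r^2)"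
  by (metis real_sqrt_abs real_sqrt_less_iff less_add_same_cancel1 zero_less_power2 less_irrefl)

lemma G_deriv:
  assumes r: "r > 0"
  shows "(G z r has_real_derivative 1 / sqrt ((x - z)^2 + r^2)) (at x)"
proof -
  have pos: "(x - z)^2 + r^2 > 0" using r by (simp add: add_nonneg_pos)
  have "\<bar>x - z\<bar> < sqrt ((x - z)^2 + r^2)" using sq_gt[OF r] .
  then have up: "x - z + sqrt ((x - z)^2 + r^2) > 0" by linarith
  have d: "((\<lambda>x. ln (x - z + sqrt ((x - z)^2 + r^2))) has_real_derivative
     (1 + (2 * (x - z)) / (2 * sqrt ((x - z)^2 + r^2))) / (x - z + sqrt ((x - z)^2 + r^2))) (at x)"
    using up pos
    apply (auto intro!: derivative_eq_intros simp: power2_eq_square)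
    by (simp add: field_simps)
  define u where "u = x - z"
  define q where "q = sqrt (u^2 + r^2)"
  have q: "\<bar>u\<bar> < q" using sq_gt[OF r] q_def by auto
  have qp: "q > 0" using q by linarith
  have up': "u + q > 0" using q by linarith
  have "(1 + (2 * u) / (2 * q)) / (u + q) = 1 / q"
  proof -
    have "1 + (2 * u) / (2 * q) = (u + q) / q" using qp by (simp add: field_simps)
    then show ?thesis using up' qp by simp
  qed
  then have e: "(1 + (2 * (x - z)) / (2 * sqrt ((x - z)^2 + r^2))) / (x - z + sqrt ((x - z)^2 + r^2))
     = 1 / sqrt ((x - z)^2 + r^2)" unfolding u_def q_def .
  have "((\<lambda>x. ln (x - z + sqrt ((x - z)^2 + r^2))) has_real_derivative 1 / sqrt ((x - z)^2 + r^2)) (at x)"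
    using d by (simp only: e)
  then show ?thesis unfolding G_def[abs_def] .
qed

lemma G_int:
  assumes r: "r > 0" and ab: "a \<le> b"
  shows "((\<lambda>\<zeta>. 1 / sqrt ((\<zeta> - z)^2 + r^2)) has_integral (G z r b - G z r a)) {a..b}"
proof -
  have cont: "continuous_on {a..b} (G z r)"
    by (intro continuous_at_imp_continuous_on ballI DERIV_isCont[OF G_deriv[OF r]])
  have der: "\<And>x. (G z r has_vector_derivative 1 / sqrt ((x - z)^2 + r^2)) (at x)"
    by (rule G_deriv[OF r, THEN has_real_derivative_iff_has_vector_derivative[THEN iffD1]])
  show ?thesis
    by (rule fundamental_theorem_of_calculus_interior_strong[OF finite.emptyI ab der cont])
qed

lemma sqrt_le_sum: "0 \<le> h \<Longrightarrow> 0 \<le> (r::real) \<Longrightarrow> sqrt (h^2 + r^2) \<le> h + r"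
  by (rule real_le_lsqrt) (auto simp: power2_eq_square algebra_simps)

lemma prod_conj: "(r::real) > 0 \<Longrightarrow> (sqrt (h^2 + r^2) - h) * (sqrt (h^2 + r^2) + h) = r^2"
proof -
  assume r: "r > 0"
  have "(sqrt (h^2 + r^2))^2 = h^2 + r^2" by (simp add: add_nonneg_nonneg)
  then show ?thesis by (simp add: algebra_simps power2_eq_square)
qed

lemma G_ub:
  assumes z: "0 < z" and h: "0 < h" and r: "0 < r" and hr: "2 * h + r \<le> 1" and zr: "2 * z + r \<le> 1"
  shows "G z r (z + h) - G z r 0 \<le> - 2 * ln r"
proof -
  have g1: "G z r (z + h) = ln (h + sqrt (h^2 + r^2))" by (simp add: G_def)
  have q: "h < sqrt (h^2 + r^2)" using sq_gt[OF r, of h] h by simp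
  have "h + sqrt (h^2 + r^2) \<le> 1" using sqrt_le_sum[of h r] h r hr by linarith
  then have a: "G z r (z + h) \<le> 0" unfolding g1 using q h by (subst ln_le_zero_iff) auto
  define Q where "Q = sqrt (z^2 + r^2)"
  have g0: "G z r 0 = ln (Q - z)" by (simp add: G_def Q_def power2_eq_square)
  have qz: "z < Q" using sq_gt[OF r, of z] z Q_def by simp
  have qle: "Q \<le> z + r" using sqrt_le_sum[of z r] z r Q_def by simp
  have pc: "(Q - z) * (Q + z) = r^2" using prod_conj[OF r, of z] Q_def by simp
  have "Q + z \<le> 1" using qle zr by linarith
  then have "r^2 \<le> Q - z" using pc qz z
    by (metis diff_gt_0_iff_gt mult_left_le mult.commute less_eq_real_def)
  then have "ln (r^2) \<le> ln (Q - z)" using r qz by (subst ln_le_cancel_iff) auto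
  then have b: "2 * ln r \<le> G z r 0" unfolding g0 using r by (simp add: ln_realpow)
  show ?thesis using a b by linarith
qed

lemma G_lb:
  assumes h: "0 < h" and r: "0 < r"
  shows "G z r (z + h) - G z r (z - h) \<ge> 2 * ln h - 2 * ln r"
proof -
  define Q where "Q = sqrt (h^2 + r^2)"
  have g1: "G z r (z + h) = ln (h + Q)" by (simp add: G_def Q_def)
  have g0: "G z r (z - h) = ln (Q - h)" by (simp add: G_def Q_def power2_eq_square)
  have qh: "h < Q" using sq_gt[OF r, of h] h Q_def by simp
  have pc: "(Q - h) * (Q + h) = r^2" using prod_conj[OF r, of h] Q_def by simp
  have "ln (Q - h) + ln (Q + h) = ln ((Q - h) * (Q + h))"
    using qh h by (simp add: ln_mult)
  also have "\<dots> = ln (r^2)" using pc by simp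
  also have "\<dots> = 2 * ln r" using r by (simp add: ln_realpow)
  finally have "ln (Q - h) + ln (Q + h) = 2 * ln r" .
  moreover have "ln h \<le> ln (h + Q)" using h qh by (subst ln_le_cancel_iff) auto
  ultimately show ?thesis unfolding g1 g0 by (simp add: add.commute)
qed

lemma s_ge: "\<bar>u\<bar> \<le> sqrt (u^2 + (r::real)^2)"
  by (metis real_sqrt_abs real_sqrt_le_mono le_add_same_cancel1 zero_le_power2)

lemma s_le: "0 \<le> r \<Longrightarrow> sqrt (u^2 + (r::real)^2) \<le> \<bar>u\<bar> + r"
  using sqrt_le_sum[of "\<bar>u\<bar>" r] by simp

lemma s_pos: "0 < r \<Longrightarrow> 0 < sqrt (u^2 + (r::real)^2)"
  using sq_gt[of r u] by linarith

locale pot =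
  fixes \<rho> :: "real \<Rightarrow> real" and L :: real
  assumes L: "L > 0" and cont: "continuous_on {0..L} \<rho>"
    and nn: "\<forall>x\<in>{0..L}. \<rho> x \<ge> 0"
    and int0: "(\<lambda>\<zeta>. \<rho> \<zeta> / \<zeta>) integrable_on {0..L}"
begin

definition I :: "real \<Rightarrow> real" where "I \<eta> = integral {0..\<eta>} (\<lambda>\<zeta>. \<rho> \<zeta> / \<zeta>)"
definition V0 :: real where "V0 = integral {0..L} (\<lambda>\<zeta>. \<rho> \<zeta> / \<zeta>)"

lemma q_nn: "x \<in> {0..L} \<Longrightarrow> 0 \<le> \<rho> x / x"
  using nn by auto

lemma q_int: "0 \<le> a \<Longrightarrow> b \<le> L \<Longrightarrow> (\<lambda>\<zeta>. \<rho> \<zeta> / \<zeta>) integrable_on {a..b}"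
  by (rule integrable_on_subinterval[OF int0]) auto

lemma I_nn: "0 \<le> \<eta> \<Longrightarrow> \<eta> \<le> L \<Longrightarrow> 0 \<le> I \<eta>"
  unfolding I_def by (rule integral_nonneg[OF q_int]) (auto intro: q_nn)

lemma V0_nn: "0 \<le> V0"
  using I_nn[of L] L by (simp add: I_def V0_def)

lemma sub_le_I: "0 \<le> a \<Longrightarrow> a \<le> b \<Longrightarrow> b \<le> \<eta> \<Longrightarrow> \<eta> \<le> L \<Longrightarrow>
   integral {a..b} (\<lambda>\<zeta>. \<rho> \<zeta> / \<zeta>) \<le> I \<eta>"
  unfolding I_def by (rule integral_subset_le) (auto intro!: q_int q_nn)

lemma sub_le_V0: "0 \<le> a \<Longrightarrow> b \<le> L \<Longrightarrow> integral {a..b} (\<lambda>\<zeta>. \<rho> \<zeta> / \<zeta>) \<le> V0"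
proof (cases "a \<le> b")
  case True
  assume "0 \<le> a" "b \<le> L" then show ?thesis using sub_le_I[of a b L] True by (simp add: I_def V0_def)
next
  case False then show ?thesis using V0_nn by simp
qed

lemma tail_eq: "0 \<le> \<eta> \<Longrightarrow> \<eta> \<le> L \<Longrightarrow> integral {\<eta>..L} (\<lambda>\<zeta>. \<rho> \<zeta> / \<zeta>) = V0 - I \<eta>"
  using Henstock_Kurzweil_Integration.integral_combine[OF _ _ int0, of \<eta>] by (simp add: I_def V0_def)

lemma pot00: "potential \<rho> L 0 0 = V0"
  unfolding potential_def V0_def by (rule integral_cong) simp

lemma f_cont: "0 < r \<Longrightarrow> continuous_on {0..L} (\<lambda>\<zeta>. \<rho> \<zeta> / sqrt ((\<zeta> - z)^2 + r^2))"
  by (intro continuous_intros cont) (use s_pos in auto)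

lemma f_int: "0 < r \<Longrightarrow> 0 \<le> a \<Longrightarrow> b \<le> L \<Longrightarrow> (\<lambda>\<zeta>. \<rho> \<zeta> / sqrt ((\<zeta> - z)^2 + r^2)) integrable_on {a..b}"
  by (rule integrable_on_subinterval[OF integrable_continuous_interval[OF f_cont]]) auto

lemma f_nn: "x \<in> {0..L} \<Longrightarrow> 0 \<le> \<rho> x / sqrt ((x - z)^2 + r^2)"
  using nn by auto

end

lemma ar1: "0 < (z::real) \<Longrightarrow> 0 < h \<Longrightarrow> z + h \<le> \<zeta> \<Longrightarrow> 0 \<le> p \<Longrightarrow> \<zeta> - z \<le> s \<Longrightarrow> p / s \<le> p / \<zeta> * ((z + h) / h)"
proof -
  assume a: "0 < z" "0 < h" "z + h \<le> \<zeta>" "0 \<le> p" "\<zeta> - z \<le> s"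
  have d: "0 < \<zeta> - z" using a by linarith
  have "p / s \<le> p / (\<zeta> - z)" using a d by (intro divide_left_mono) auto
  also have "p / (\<zeta> - z) \<le> p / \<zeta> * ((z + h) / h)"
  proof -
    have e: "(z + h) * (\<zeta> - z) - h * \<zeta> = z * (\<zeta> - z - h)" by (simp add: algebra_simps)
    have "0 \<le> z * (\<zeta> - z - h)" using a by simp
    then have "h * \<zeta> \<le> (z + h) * (\<zeta> - z)" using e by linarith
    then have "1 / (\<zeta> - z) \<le> ((z + h) / h) / \<zeta>"
      using a d by (simp add: divide_simps)
    then have "p * (1 / (\<zeta> - z)) \<le> p * (((z + h) / h) / \<zeta>)" using a by (intro mult_left_mono) auto
    then show ?thesis by (simp add: mult.commute)
  qed
  finally show ?thesis .
qed
lemma ar2: "0 < (z::real) \<Longrightarrow> z < \<eta> \<Longrightarrow> \<eta> \<le> \<zeta> \<Longrightarrow> 0 \<le> p \<Longrightarrow> \<zeta> - z \<le> s \<Longrightarrow> p / s \<le> p / \<zeta> * (\<eta> / (\<eta> - z))"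
proof -
  assume a: "0 < z" "z < \<eta>" "\<eta> \<le> \<zeta>" "0 \<le> p" "\<zeta> - z \<le> s"
  have d: "0 < \<zeta> - z" using a by linarith
  have "p / s \<le> p / (\<zeta> - z)" using a d by (intro divide_left_mono) auto
  also have "p / (\<zeta> - z) \<le> p / \<zeta> * (\<eta> / (\<eta> - z))"
  proof -
    have e: "\<eta> * (\<zeta> - z) - (\<eta> - z) * \<zeta> = z * (\<zeta> - \<eta>)" by (simp add: algebra_simps)
    have "0 \<le> z * (\<zeta> - \<eta>)" using a by simp
    then have "(\<eta> - z) * \<zeta> \<le> \<eta> * (\<zeta> - z)" using e by linarith
    then have "1 / (\<zeta> - z) \<le> (\<eta> / (\<eta> - z)) / \<zeta>"
      using a d by (simp add: divide_simps)
    then have "p * (1 / (\<zeta> - z)) \<le> p * ((\<eta> / (\<eta> - z)) / \<zeta>)" using a by (intro mult_left_mono) auto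
    then show ?thesis by (simp add: mult.commute)
  qed
  finally show ?thesis .
qed
lemma ar3: "0 < (\<eta>::real) \<Longrightarrow> \<eta> \<le> \<zeta> \<Longrightarrow> 0 < r \<Longrightarrow> 0 \<le> p \<Longrightarrow> s \<le> \<zeta> + r \<Longrightarrow> 0 < s \<Longrightarrow> p / \<zeta> * (\<eta> / (\<eta> + r)) \<le> p / s"
proof -
  assume a: "0 < \<eta>" "\<eta> \<le> \<zeta>" "0 < r" "0 \<le> p" "s \<le> \<zeta> + r" "0 < s"
  have e: "(\<eta> + r) * \<zeta> - \<eta> * (\<zeta> + r) = r * (\<zeta> - \<eta>)" by (simp add: algebra_simps)
  have "0 \<le> r * (\<zeta> - \<eta>)" using a by simp
  then have "\<eta> * (\<zeta> + r) \<le> (\<eta> + r) * \<zeta>" using e by linarith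
  then have "(\<eta> / (\<eta> + r)) / \<zeta> \<le> 1 / (\<zeta> + r)"
    using a by (simp add: divide_simps)
  also have "\<dots> \<le> 1 / s" using a by (intro divide_left_mono) auto
  finally have "p * ((\<eta> / (\<eta> + r)) / \<zeta>) \<le> p * (1 / s)" using a by (intro mult_left_mono) auto
  then show ?thesis by (simp add: mult.commute)
qed
context pot
begin

abbreviation f :: "real \<Rightarrow> real \<Rightarrow> real \<Rightarrow> real" where
  "f z r \<equiv> (\<lambda>\<zeta>. \<rho> \<zeta> / sqrt ((\<zeta> - z)^2 + r^2))"

lemma far_ub:
  assumes z: "0 < z" and h: "0 < h" and w: "z + h \<le> \<eta>" and eL: "\<eta> \<le> L" and r: "0 < r"
  shows "integral {z+h..L} (f z r) \<le> ((z + h) / h) * I \<eta> + (\<eta> / (\<eta> - z)) * V0"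
proof -
  have split: "integral {z+h..\<eta>} (f z r) + integral {\<eta>..L} (f z r) = integral {z+h..L} (f z r)"
    by (rule Henstock_Kurzweil_Integration.integral_combine) (use z h w eL r in \<open>auto intro!: f_int\<close>)
  have A: "integral {z+h..\<eta>} (f z r) \<le> integral {z+h..\<eta>} (\<lambda>\<zeta>. \<rho> \<zeta> / \<zeta> * ((z + h) / h))"
  proof (rule integral_le)
    show "f z r integrable_on {z + h..\<eta>}" using z h r eL by (intro f_int) auto
    show "(\<lambda>\<zeta>. \<rho> \<zeta> / \<zeta> * ((z + h) / h)) integrable_on {z + h..\<eta>}"
      using z h eL by (intro integrable_on_mult_left q_int) auto
    fix x assume x: "x \<in> {z + h..\<eta>}"
    have "x - z \<le> sqrt ((x - z)^2 + r^2)" using s_ge[of "x - z" r] by linarith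
    then show "f z r x \<le> \<rho> x / x * ((z + h) / h)"
      using x z h eL nn by (intro ar1) auto
  qed
  have A2: "integral {z+h..\<eta>} (\<lambda>\<zeta>. \<rho> \<zeta> / \<zeta>) \<le> I \<eta>"
    using z h w eL by (intro sub_le_I) auto
  have B: "integral {\<eta>..L} (f z r) \<le> integral {\<eta>..L} (\<lambda>\<zeta>. \<rho> \<zeta> / \<zeta> * (\<eta> / (\<eta> - z)))"
  proof (rule integral_le)
    show "f z r integrable_on {\<eta>..L}" using z h r w by (intro f_int) auto
    show "(\<lambda>\<zeta>. \<rho> \<zeta> / \<zeta> * (\<eta> / (\<eta> - z))) integrable_on {\<eta>..L}"
      using z h w by (intro integrable_on_mult_left q_int) auto
    fix x assume x: "x \<in> {\<eta>..L}"
    have "x - z \<le> sqrt ((x - z)^2 + r^2)" using s_ge[of "x - z" r] by linarith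
    then show "f z r x \<le> \<rho> x / x * (\<eta> / (\<eta> - z))"
      using x z h w nn by (intro ar2) auto
  qed
  have B2: "integral {\<eta>..L} (\<lambda>\<zeta>. \<rho> \<zeta> / \<zeta>) \<le> V0"
    using z h w by (intro sub_le_V0) auto
  have k1: "0 \<le> (z + h) / h" using z h by simp
  have k2: "0 \<le> \<eta> / (\<eta> - z)" using z h w by simp
  have "integral {z+h..L} (f z r) \<le> integral {z+h..\<eta>} (\<lambda>\<zeta>. \<rho> \<zeta> / \<zeta>) * ((z + h) / h)
      + integral {\<eta>..L} (\<lambda>\<zeta>. \<rho> \<zeta> / \<zeta>) * (\<eta> / (\<eta> - z))"
    using split A B unfolding integral_mult_left by linarith
  also have "\<dots> \<le> I \<eta> * ((z + h) / h) + V0 * (\<eta> / (\<eta> - z))"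
    using A2 B2 k1 k2 by (intro add_mono mult_right_mono) auto
  finally show ?thesis by (simp add: mult.commute)
qed

lemma far_lb:
  assumes z: "0 \<le> z" "z \<le> \<eta>" and e: "0 < \<eta>" "\<eta> \<le> L" and r: "0 < r"
  shows "integral {\<eta>..L} (f z r) \<ge> (V0 - I \<eta>) * (\<eta> / (\<eta> + r))"
proof -
  have "integral {\<eta>..L} (\<lambda>\<zeta>. \<rho> \<zeta> / \<zeta> * (\<eta> / (\<eta> + r))) \<le> integral {\<eta>..L} (f z r)"
  proof (rule integral_le)
    show "f z r integrable_on {\<eta>..L}" using z e r by (intro f_int) auto
    show "(\<lambda>\<zeta>. \<rho> \<zeta> / \<zeta> * (\<eta> / (\<eta> + r))) integrable_on {\<eta>..L}"
      using e by (intro integrable_on_mult_left q_int) auto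
    fix x assume x: "x \<in> {\<eta>..L}"
    have "sqrt ((x - z)^2 + r^2) \<le> \<bar>x - z\<bar> + r" using s_le[of r "x - z"] r by simp
    also have "\<dots> \<le> x + r" using x z e by auto
    finally have "sqrt ((x - z)^2 + r^2) \<le> x + r" .
    then show "\<rho> x / x * (\<eta> / (\<eta> + r)) \<le> f z r x"
      using x e r nn s_pos[OF r, of "x - z"] by (intro ar3) auto
  qed
  then show ?thesis using tail_eq[of \<eta>] e unfolding integral_mult_left by simp
qed

lemma V_split:
  assumes "0 \<le> w" "w \<le> L" "0 < r"
  shows "potential \<rho> L r z = integral {0..w} (f z r) + integral {w..L} (f z r)"
  unfolding potential_def
  by (rule Henstock_Kurzweil_Integration.integral_combine[symmetric]) (use assms in \<open>auto intro!: f_int\<close>)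

lemma V_lb:
  assumes "0 \<le> a" "a \<le> b" "b \<le> \<eta>" "\<eta> \<le> L" "0 < r"
  shows "potential \<rho> L r z \<ge> integral {a..b} (f z r) + integral {\<eta>..L} (f z r)"
proof -
  have e1: "potential \<rho> L r z = integral {0..a} (f z r) + integral {a..L} (f z r)"
    using assms by (intro V_split) auto
  have e2: "integral {a..b} (f z r) + integral {b..L} (f z r) = integral {a..L} (f z r)"
    by (rule Henstock_Kurzweil_Integration.integral_combine) (use assms in \<open>auto intro!: f_int\<close>)
  have e3: "integral {b..\<eta>} (f z r) + integral {\<eta>..L} (f z r) = integral {b..L} (f z r)"
    by (rule Henstock_Kurzweil_Integration.integral_combine) (use assms in \<open>auto intro!: f_int\<close>)
  have n1: "0 \<le> integral {0..a} (f z r)"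
    by (rule integral_nonneg) (use assms f_nn in \<open>auto intro!: f_int\<close>)
  have n2: "0 \<le> integral {b..\<eta>} (f z r)"
    by (rule integral_nonneg) (use assms f_nn in \<open>auto intro!: f_int\<close>)
  show ?thesis using e1 e2 e3 n1 n2 by linarith
qed

lemma near_ub:
  assumes r: "0 < r" and ab: "0 \<le> a" "a \<le> b" "b \<le> L"
    and e: "(e has_integral E) {a..b}"
    and le: "\<And>\<zeta>. \<zeta> \<in> {a..b} \<Longrightarrow> \<rho> \<zeta> / sqrt ((\<zeta> - z)^2 + r^2) \<le> P / sqrt ((\<zeta> - z)^2 + r^2) + e \<zeta>"
  shows "integral {a..b} (f z r) \<le> P * (G z r b - G z r a) + E"
proof -
  have g: "((\<lambda>\<zeta>. P * (1 / sqrt ((\<zeta> - z)^2 + r^2))) has_integral P * (G z r b - G z r a)) {a..b}"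
    by (rule has_integral_mult_right[OF G_int[OF r ab(2)]])
  have s: "((\<lambda>\<zeta>. P * (1 / sqrt ((\<zeta> - z)^2 + r^2)) + e \<zeta>) has_integral P * (G z r b - G z r a) + E) {a..b}"
    by (rule has_integral_add[OF g e])
  show ?thesis
    by (rule has_integral_le[OF integrable_integral[OF f_int[OF r ab(1) ab(3)]] s]) (use le in simp)
qed

lemma near_lb:
  assumes r: "0 < r" and ab: "0 \<le> a" "a \<le> b" "b \<le> L"
    and e: "(e has_integral E) {a..b}"
    and le: "\<And>\<zeta>. \<zeta> \<in> {a..b} \<Longrightarrow> P / sqrt ((\<zeta> - z)^2 + r^2) - e \<zeta> \<le> \<rho> \<zeta> / sqrt ((\<zeta> - z)^2 + r^2)"
  shows "integral {a..b} (f z r) \<ge> P * (G z r b - G z r a) - E"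
proof -
  have g: "((\<lambda>\<zeta>. P * (1 / sqrt ((\<zeta> - z)^2 + r^2))) has_integral P * (G z r b - G z r a)) {a..b}"
    by (rule has_integral_mult_right[OF G_int[OF r ab(2)]])
  have s: "((\<lambda>\<zeta>. P * (1 / sqrt ((\<zeta> - z)^2 + r^2)) - e \<zeta>) has_integral P * (G z r b - G z r a) - E) {a..b}"
    by (rule has_integral_diff[OF g e])
  show ?thesis
    by (rule has_integral_le[OF s integrable_integral[OF f_int[OF r ab(1) ab(3)]]]) (use le in simp)
qed

end

lemma inv_int:
  fixes a b :: real
  assumes "0 < a" "a \<le> b"
  shows "((\<lambda>s. 1 / s) has_integral (ln b - ln a)) {a..b}"
proof -
  have d: "(ln has_vector_derivative 1 / x) (at x within {a..b})" if x: "x \<in> {a..b}" for x :: real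
  proof -
    have "x > 0" using assms x by auto
    then have "(ln has_real_derivative 1 / x) (at x within {a..b})"
      by (rule has_field_derivative_at_within[OF DERIV_ln_divide])
    then show ?thesis
      by (simp add: has_real_derivative_iff_has_vector_derivative)
  qed
  show ?thesis using fundamental_theorem_of_calculus[of a b ln "\<lambda>s. 1 / s", OF assms(2) d] by simp
qed

lemma log_small:
  fixes g :: "real \<Rightarrow> real"
  assumes b: "0 < b" and mono: "\<And>x y. x \<in> {0..b} \<Longrightarrow> y \<in> {0..b} \<Longrightarrow> x \<le> y \<Longrightarrow> g x \<le> g y"
    and gnn: "\<And>x. x \<in> {0..b} \<Longrightarrow> 0 \<le> g x"
    and gi: "(\<lambda>t. g t / t) integrable_on {0..b}" and e: "0 < \<epsilon>"
  shows "\<exists>t0>0. \<forall>t\<in>{0<..t0}. g t * ln (1 / t) \<le> \<epsilon>"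
proof -
  define J where "J u = integral {0..u} (\<lambda>t. g t / t)" for u
  have cJ: "continuous_on {0..b} J" unfolding J_def by (rule indefinite_integral_continuous_1[OF gi])
  have J0: "J 0 = 0" by (simp add: J_def)
  have b0: "0 \<in> {0..b}" using b by simp
  have e2: "\<epsilon> / 2 > 0" using e by simp
  obtain d where d: "d > 0" and dJ': "\<forall>u\<in>{0..b}. dist u 0 < d \<longrightarrow> dist (J u) (J 0) < \<epsilon> / 2"
    using cJ[unfolded continuous_on_iff, rule_format, OF b0 e2] by blast
  have dJ: "dist (J u) (J 0) < \<epsilon> / 2" if "u \<in> {0..b}" "dist u 0 < d" for u
    using dJ' that by simp
  define u0 where "u0 = min (d / 2) (min b 1)"
  have u0: "0 < u0" "u0 < d" "u0 \<le> b" "u0 \<le> 1" unfolding u0_def using d b by linarith+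
  show ?thesis
  proof (intro exI[of _ "u0^2"] conjI ballI)
    show "0 < u0^2" using u0 by simp
    fix t assume t: "t \<in> {0<..u0^2}"
    define u where "u = sqrt t"
    have tp: "0 < t" using t by simp
    have up: "0 < u" using tp by (simp add: u_def)
    have tu: "t = u^2" using tp by (simp add: u_def)
    have "sqrt t \<le> sqrt (u0^2)" using t by (intro real_sqrt_le_mono) simp
    then have uu0: "u \<le> u0" using u0 unfolding u_def by simp
    have tle: "t \<le> u" using tu up uu0 u0 by (simp add: power2_eq_square mult_le_cancel_right1 less_imp_le)
    have ub: "u \<le> b" using uu0 u0 by linarith
    have hi: "((\<lambda>s. g t * (1 / s)) has_integral g t * (ln u - ln t)) {t..u}"
      by (rule has_integral_mult_right[OF inv_int[OF tp tle]])
    have "g t * (ln u - ln t) \<le> integral {t..u} (\<lambda>s. g s / s)"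
    proof (rule has_integral_le[OF hi integrable_integral])
      show "(\<lambda>s. g s / s) integrable_on {t..u}"
        by (rule integrable_on_subinterval[OF gi]) (use tp ub in auto)
      fix s assume s: "s \<in> {t..u}"
      then have "0 < s" using tp by auto
      moreover have "g t \<le> g s" using s tp ub by (intro mono) auto
      ultimately show "g t * (1 / s) \<le> g s / s" by (simp add: divide_right_mono)
    qed
    also have "\<dots> \<le> J u" unfolding J_def
      by (rule integral_subset_le) (use tp tle ub up in \<open>auto intro!: integrable_on_subinterval[OF gi] gnn divide_nonneg_nonneg\<close>)
    also have "\<dots> < \<epsilon> / 2" using dJ[of u] up ub uu0 u0 J0 by (auto simp: dist_real_def)
    finally have A: "g t * (ln u - ln t) < \<epsilon> / 2" .
    have "ln t = 2 * ln u" using tu up by (simp add: ln_realpow)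
    moreover have "ln (1 / t) = - ln t" using tp by (simp add: ln_div)
    ultimately have "g t * ln (1 / t) = 2 * (g t * (ln u - ln t))" by (simp add: algebra_simps)
    then show "g t * ln (1 / t) \<le> \<epsilon>" using A by linarith
  qed
qed

lemma sym_int:
  fixes g :: "real \<Rightarrow> real"
  assumes a: "0 \<le> a" and gJ: "(g has_integral J) {0..a}"
  shows "((\<lambda>\<zeta>. g \<bar>\<zeta> - z\<bar>) has_integral 2 * J) {z - a..z + a}"
proof -
  have r1: "(((\<lambda>\<zeta>. g (\<zeta> - z)) \<circ> (+) z) has_integral J) {0..a}"
    using gJ by (simp add: comp_def)
  have r2: "((\<lambda>\<zeta>. g (\<zeta> - z)) has_integral J) {z..z + a}"
    using r1 unfolding has_integral_shift_Icc_real by (simp add: add.commute)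
  have r3: "((\<lambda>\<zeta>. g \<bar>\<zeta> - z\<bar>) has_integral J) {z..z + a}"
    using r2 by (rule has_integral_cong[THEN iffD1, rotated]) simp
  have l1: "((\<lambda>x. g (- x)) has_integral J) {-a..-0}"
    using gJ by (simp only: has_integral_reflect_real)
  have l2: "(((\<lambda>\<zeta>. g (z - \<zeta>)) \<circ> (+) z) has_integral J) {-a..0}"
    using l1 by (simp add: comp_def)
  have l3: "((\<lambda>\<zeta>. g (z - \<zeta>)) has_integral J) {z - a..z}"
    using l2 unfolding has_integral_shift_Icc_real by (simp add: add.commute)
  have l4: "((\<lambda>\<zeta>. g \<bar>\<zeta> - z\<bar>) has_integral J) {z - a..z}"
    using l3 by (rule has_integral_cong[THEN iffD1, rotated]) (simp add: abs_of_nonpos)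
  have "((\<lambda>\<zeta>. g \<bar>\<zeta> - z\<bar>) has_integral J + J) {z - a..z + a}"
    by (rule has_integral_combine[OF _ _ l4 r3]) (use a in auto)
  then show ?thesis by simp
qed

lemma cont_small:
  fixes g :: "real \<Rightarrow> real"
  assumes c: "continuous_on {0..a} g" and g0: "g 0 = 0" and a: "0 < a" and e: "0 < \<epsilon>"
  shows "\<exists>t0>0. t0 \<le> a \<and> (\<forall>t\<in>{0..t0}. g t \<le> \<epsilon>)"
proof -
  have a0: "0 \<in> {0..a}" using a by simp
  obtain d where d: "d > 0" and dd: "\<forall>u\<in>{0..a}. dist u 0 < d \<longrightarrow> dist (g u) (g 0) < \<epsilon>"
    using c[unfolded continuous_on_iff, rule_format, OF a0 e] by blast
  define t0 where "t0 = min (d / 2) a"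
  have t0: "0 < t0" "t0 < d" "t0 \<le> a" unfolding t0_def using d a by linarith+
  show ?thesis
  proof (intro exI[of _ t0] conjI ballI)
    fix t assume t: "t \<in> {0..t0}"
    then have "t \<in> {0..a}" "dist t 0 < d" using t0 by (auto simp: dist_real_def)
    then have "dist (g t) (g 0) < \<epsilon>" using dd by blast
    then show "g t \<le> \<epsilon>" using g0 by (simp add: dist_real_def)
  qed (use t0 in auto)
qed

lemma int_small:
  fixes g :: "real \<Rightarrow> real"
  assumes gi: "g integrable_on {0..a}" and a: "0 < a" and e: "0 < \<epsilon>"
  shows "\<exists>t0>0. t0 \<le> a \<and> (\<forall>t\<in>{0..t0}. integral {0..t} g \<le> \<epsilon>)"
  by (rule cont_small[OF indefinite_integral_continuous_1[OF gi] _ a e]) simp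

lemma ar4:
  fixes p q s d w :: real
  assumes d: "0 < d" "d \<le> s" and pq: "\<bar>p - q\<bar> \<le> w"
  shows "p / s \<le> q / s + w / d" "q / s - w / d \<le> p / s"
proof -
  have s: "0 < s" using d by linarith
  have w: "0 \<le> w" using pq by linarith
  have "\<bar>p / s - q / s\<bar> = \<bar>p - q\<bar> / s" using s by (simp add: diff_divide_distrib[symmetric])
  also have "\<dots> \<le> w / s" using pq s by (simp add: divide_right_mono)
  also have "\<dots> \<le> w / d" using w d by (intro divide_left_mono) auto
  finally have "\<bar>p / s - q / s\<bar> \<le> w / d" .
  then show "p / s \<le> q / s + w / d" "q / s - w / d \<le> p / s" by linarith+
qed

context
  fixes \<rho> :: "real \<Rightarrow> real" and b :: real
  assumes b: "0 < b" and cb: "continuous_on {0..b} \<rho>"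
begin

definition S where "S t = {\<bar>\<rho> x - \<rho> y\<bar> | x y. x \<in> {0..b} \<and> y \<in> {0..b} \<and> \<bar>x - y\<bar> \<le> t}"

lemma om_eq: "modulus_of_continuity 0 b \<rho> t = Sup (S t)"
  by (simp add: modulus_of_continuity_def S_def)

lemma S_bdd: "bdd_above (S t)"
proof -
  have "compact (\<rho> ` {0..b})" by (rule compact_continuous_image[OF cb compact_Icc])
  then have "bounded (\<rho> ` {0..b})" by (rule compact_imp_bounded)
  then obtain M where M: "\<forall>x\<in>\<rho> ` {0..b}. norm x \<le> M" unfolding bounded_iff by blast
  show ?thesis
  proof (rule bdd_aboveI[of _ "2 * M"])
    fix v assume "v \<in> S t"
    then obtain x y where v: "v = \<bar>\<rho> x - \<rho> y\<bar>" and xy: "x \<in> {0..b}" "y \<in> {0..b}"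
      unfolding S_def by blast
    have "\<bar>\<rho> x\<bar> \<le> M" "\<bar>\<rho> y\<bar> \<le> M" using M xy by auto
    then show "v \<le> 2 * M" using v by linarith
  qed
qed

lemma om_ge:
  assumes "x \<in> {0..b}" "y \<in> {0..b}" "\<bar>x - y\<bar> \<le> t"
  shows "\<bar>\<rho> x - \<rho> y\<bar> \<le> modulus_of_continuity 0 b \<rho> t"
  unfolding om_eq by (rule cSup_upper[OF _ S_bdd]) (use assms in \<open>auto simp: S_def\<close>)

lemma om_nn: "0 \<le> t \<Longrightarrow> 0 \<le> modulus_of_continuity 0 b \<rho> t"
  using om_ge[of 0 0 t] b by simp

lemma om_mono:
  assumes "0 \<le> s" "s \<le> t"
  shows "modulus_of_continuity 0 b \<rho> s \<le> modulus_of_continuity 0 b \<rho> t"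
  unfolding om_eq
proof (rule cSup_subset_mono[OF _ S_bdd])
  have "\<bar>\<rho> 0 - \<rho> 0\<bar> \<in> S s" unfolding S_def using assms b by force
  then show "S s \<noteq> {}" by blast
  show "S s \<subseteq> S t" unfolding S_def using assms by force
qed

end

context pot
begin

lemma final:
  assumes al: "0 < \<alpha>" "\<alpha> < (c - V0) / 2" and be: "(c - V0) / 2 < \<beta>"
    and z2: "z2 > L" and rcc: "continuous_on {0..z2} rc" and rc0: "rc 0 = 0"
    and rcp: "\<forall>z\<in>{0<..<z2}. rc z > 0" and lev: "\<forall>z\<in>{0<..<z2}. potential \<rho> L (rc z) z = c"
    and UB: "\<And>\<epsilon>. \<epsilon> > 0 \<Longrightarrow> \<exists>z1>0. \<exists>r1>0. \<forall>z\<in>{0<..z1}. \<forall>r\<in>{0<..r1}.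
               potential \<rho> L r z \<le> 2 * P z * (- ln r) + V0 + \<epsilon>"
    and LB: "\<And>\<epsilon>. \<epsilon> > 0 \<Longrightarrow> \<exists>z1>0. \<exists>r1>0. \<forall>z\<in>{0<..z1}. \<forall>r\<in>{0<..r1}.
               potential \<rho> L r z \<ge> 2 * Q z * (- ln r) + V0 - \<epsilon>"
    and PQ: "\<exists>z1>0. \<forall>z\<in>{0<..z1}. P z > 0 \<and> Q z > 0"
  shows "\<exists>z0\<in>{0<..L}. \<forall>z\<in>{0<..z0}. exp (- \<beta> / Q z) < rc z \<and> rc z < exp (- \<alpha> / P z)"
proof -
  define e1 where "e1 = (c - V0 - 2 * \<alpha>) / 2"
  define e2 where "e2 = (2 * \<beta> + V0 - c) / 2"
  have al2: "2 * \<alpha> < c - V0" using al(2) by (simp add: field_simps)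
  have be2: "c - V0 < 2 * \<beta>" using be by (simp add: field_simps)
  have e1d: "2 * e1 = c - V0 - 2 * \<alpha>" unfolding e1_def by simp
  have e2d: "2 * e2 = 2 * \<beta> + V0 - c" unfolding e2_def by simp
  have e1: "e1 > 0" using al2 e1d by linarith
  have e2: "e2 > 0" using be2 e2d by linarith
  obtain za ra where za: "za > 0" "ra > 0"
    and ub: "\<forall>z\<in>{0<..za}. \<forall>r\<in>{0<..ra}. potential \<rho> L r z \<le> 2 * P z * (- ln r) + V0 + e1"
    using UB[OF e1] by blast
  obtain zb rb where zb: "zb > 0" "rb > 0"
    and lb: "\<forall>z\<in>{0<..zb}. \<forall>r\<in>{0<..rb}. potential \<rho> L r z \<ge> 2 * Q z * (- ln r) + V0 - e2"
    using LB[OF e2] by blast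
  obtain zc where zc: "zc > 0" and pq: "\<forall>z\<in>{0<..zc}. P z > 0 \<and> Q z > 0"
    using PQ by blast
  define rm where "rm = min ra rb"
  have rm: "rm > 0" "rm \<le> ra" "rm \<le> rb" using za zb unfolding rm_def by linarith+
  have z20: "0 \<in> {0..z2}" using z2 L by simp
  obtain d where d: "d > 0" and dd: "\<forall>u\<in>{0..z2}. dist u 0 < d \<longrightarrow> dist (rc u) (rc 0) < rm"
    using rcc[unfolded continuous_on_iff, rule_format, OF z20 rm(1)] by blast
  define z0 where "z0 = min (min za zb) (min zc (min (d / 2) L))"
  have z0: "0 < z0" "z0 \<le> za" "z0 \<le> zb" "z0 \<le> zc" "z0 < d" "z0 \<le> L"
    unfolding z0_def using za zb zc d L by linarith+
  show ?thesis
  proof (intro bexI[of _ z0] ballI conjI)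
    show "z0 \<in> {0<..L}" using z0 by simp
    fix z assume z: "z \<in> {0<..z0}"
    have zz2: "z \<in> {0<..<z2}" using z z0 z2 by auto
    have r0: "rc z > 0" using rcp zz2 by blast
    have "z \<in> {0..z2}" "dist z 0 < d" using zz2 z z0 by (auto simp: dist_real_def)
    then have "dist (rc z) (rc 0) < rm" using dd by blast
    then have rlt: "rc z < rm" using rc0 by (simp add: dist_real_def)
    have V: "potential \<rho> L (rc z) z = c" using lev zz2 by blast
    have Pp: "P z > 0" and Qp: "Q z > 0" using pq z z0 by auto
    have u: "c \<le> 2 * P z * (- ln (rc z)) + V0 + e1"
      using ub z z0 r0 rlt rm V by fastforce
    have l: "c \<ge> 2 * Q z * (- ln (rc z)) + V0 - e2"
      using lb z z0 r0 rlt rm V by fastforce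
    show "rc z < exp (- \<alpha> / P z)"
    proof (rule ccontr)
      assume "\<not> rc z < exp (- \<alpha> / P z)"
      then have "exp (- \<alpha> / P z) \<le> rc z" by simp
      then have "ln (exp (- \<alpha> / P z)) \<le> ln (rc z)" using r0 by (subst ln_le_cancel_iff) auto
      then have "- \<alpha> / P z \<le> ln (rc z)" by simp
      then have "(- \<alpha> / P z) * P z \<le> ln (rc z) * P z" using Pp by (intro mult_right_mono) auto
      then have "- \<alpha> \<le> P z * ln (rc z)" using Pp by (simp add: mult.commute)
      then have "P z * (- ln (rc z)) \<le> \<alpha>" by simp
      then show False using u e1d e1 by linarith
    qed
    show "exp (- \<beta> / Q z) < rc z"
    proof (rule ccontr)
      assume "\<not> exp (- \<beta> / Q z) < rc z"
      then have "rc z \<le> exp (- \<beta> / Q z)" by simp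
      then have "ln (rc z) \<le> ln (exp (- \<beta> / Q z))" using r0 by (subst ln_le_cancel_iff) auto
      then have "ln (rc z) \<le> - \<beta> / Q z" by simp
      then have "ln (rc z) * Q z \<le> (- \<beta> / Q z) * Q z" using Qp by (intro mult_right_mono) auto
      then have "Q z * ln (rc z) \<le> - \<beta>" using Qp by (simp add: mult.commute)
      then have "\<beta> \<le> Q z * (- ln (rc z))" by simp
      then show False using l e2d e2 by linarith
    qed
  qed
qed

end

lemma tail_bound:
  fixes V0 z \<eta> \<epsilon> :: real
  assumes V0: "0 \<le> V0" and z: "0 < z" "z \<le> \<eta> / 2" and e: "0 < \<epsilon>"
    and zs: "z \<le> \<eta> * \<epsilon> / (4 * (V0 + 1))"
  shows "(\<eta> / (\<eta> - z)) * V0 \<le> V0 + \<epsilon> / 2"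
proof -
  have eta: "0 < \<eta>" using z by linarith
  have d: "0 < \<eta> - z" using z eta by linarith
  have "z * (4 * (V0 + 1)) \<le> \<eta> * \<epsilon>" using zs V0 by (simp add: le_divide_eq)
  then have "z * V0 \<le> \<eta> * \<epsilon> / 4" using z V0 by (simp add: algebra_simps)
  also have "\<dots> \<le> \<epsilon> / 2 * (\<eta> - z)"
  proof -
    have x: "\<epsilon> / 2 * (\<eta> - z) - \<eta> * \<epsilon> / 4 = \<epsilon> * (\<eta> - 2 * z) / 4" by (simp add: field_simps)
    have "0 \<le> \<eta> - 2 * z" using z by linarith
    then have "0 \<le> \<epsilon> * (\<eta> - 2 * z) / 4" using e by simp
    then show ?thesis using x by linarith
  qed
  finally have "z * V0 \<le> \<epsilon> / 2 * (\<eta> - z)" .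
  then have "z * V0 / (\<eta> - z) \<le> \<epsilon> / 2" using d by (simp add: pos_divide_le_eq)
  moreover have "(\<eta> / (\<eta> - z)) * V0 = V0 + z * V0 / (\<eta> - z)" using d by (simp add: field_simps)
  ultimately show ?thesis by linarith
qed

lemma tail_bound2:
  fixes V0 I r \<eta> \<epsilon> :: real
  assumes V0: "0 \<le> I" "I \<le> V0" and r: "0 < r" and eta: "0 < \<eta>" and e: "0 < \<epsilon>"
    and rs: "r \<le> \<eta> * \<epsilon> / (3 * (V0 + 1))"
  shows "(V0 - I) * (\<eta> / (\<eta> + r)) \<ge> V0 - I - \<epsilon> / 3"
proof -
  have "r * (3 * (V0 + 1)) \<le> \<eta> * \<epsilon>" using rs V0 by (simp add: le_divide_eq)
  then have A: "r * V0 \<le> \<eta> * \<epsilon> / 3" using r V0 by (simp add: algebra_simps)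
  have "(V0 - I) * r \<le> V0 * r" using V0 r by (intro mult_right_mono) auto
  also have "\<dots> \<le> \<eta> * \<epsilon> / 3" using A by (simp add: mult.commute)
  also have "\<dots> \<le> (\<eta> + r) * (\<epsilon> / 3)" using r e by (simp add: algebra_simps)
  finally have B: "(V0 - I) * r / (\<eta> + r) \<le> \<epsilon> / 3" using r eta by (simp add: pos_divide_le_eq mult.commute)
  have "(V0 - I) * (\<eta> / (\<eta> + r)) = (V0 - I) - (V0 - I) * r / (\<eta> + r)" using r eta by (simp add: field_simps)
  then show ?thesis using B by linarith
qed

context pot
begin

lemma I_small: "0 < \<epsilon> \<Longrightarrow> \<exists>t0>0. t0 \<le> L \<and> (\<forall>t\<in>{0..t0}. I t \<le> \<epsilon>)"
  unfolding I_def by (rule int_small[OF int0 L])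

lemma a_UB:
  assumes b: "0 < b" "b \<le> L" and mono: "mono_on {0..b} \<rho>" and dl: "0 < \<delta>" "\<delta> < 1" and e: "0 < \<epsilon>"
  shows "\<exists>z1>0. \<exists>r1>0. \<forall>z\<in>{0<..z1}. \<forall>r\<in>{0<..r1}.
           potential \<rho> L r z \<le> 2 * \<rho> ((1 + \<delta>) * z) * (- ln r) + V0 + \<epsilon>"
proof -
  define K where "K = (1 + \<delta>) / \<delta>"
  have K: "K > 0" using dl by (simp add: K_def)
  obtain \<eta>0 where \<eta>0: "\<eta>0 > 0" "\<eta>0 \<le> L" and I\<eta>0: "\<forall>t\<in>{0..\<eta>0}. I t \<le> \<epsilon> / (2 * K)"
    using I_small[of "\<epsilon> / (2 * K)"] e K by auto
  define \<eta> where "\<eta> = min \<eta>0 b"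
  have \<eta>: "0 < \<eta>" "\<eta> \<le> b" "\<eta> \<le> L" "\<eta> \<le> \<eta>0" unfolding \<eta>_def using \<eta>0 b by linarith+
  have I\<eta>: "K * I \<eta> \<le> \<epsilon> / 2"
  proof -
    have "I \<eta> \<le> \<epsilon> / (2 * K)" using I\<eta>0 \<eta> by auto
    then have "K * I \<eta> \<le> K * (\<epsilon> / (2 * K))" using K by (intro mult_left_mono) auto
    then show ?thesis using K by simp
  qed
  define z1 where "z1 = min (\<eta> / (2 * (1 + \<delta>))) (min (1 / 4) (\<eta> * \<epsilon> / (4 * (V0 + 1))))"
  have V0p: "V0 + 1 > 0" using V0_nn by linarith
  have z1: "0 < z1" "z1 \<le> \<eta> / (2 * (1 + \<delta>))" "z1 \<le> 1 / 4" "z1 \<le> \<eta> * \<epsilon> / (4 * (V0 + 1))"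
  proof -
    have "0 < \<eta> / (2 * (1 + \<delta>))" "0 < \<eta> * \<epsilon> / (4 * (V0 + 1))" using \<eta> dl e V0p by simp_all
    then show "0 < z1" unfolding z1_def by simp
    show "z1 \<le> \<eta> / (2 * (1 + \<delta>))" unfolding z1_def by (rule min.cobounded1)
    show "z1 \<le> 1 / 4" unfolding z1_def by (rule min.coboundedI2, rule min.cobounded1)
    show "z1 \<le> \<eta> * \<epsilon> / (4 * (V0 + 1))" unfolding z1_def by (rule min.coboundedI2, rule min.cobounded2)
  qed
  have main: "\<forall>z\<in>{0<..z1}. \<forall>r\<in>{0<..1 / 4::real}.
           potential \<rho> L r z \<le> 2 * \<rho> ((1 + \<delta>) * z) * (- ln r) + V0 + \<epsilon>"
  proof (intro ballI)
    fix z r assume z: "z \<in> {0<..z1}" and r: "r \<in> {0<..1 / 4::real}"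
    have zp: "0 < z" and rp: "0 < r" and r4: "r \<le> 1 / 4" using z r by auto
    define h where "h = \<delta> * z"
    have hp: "0 < h" using dl zp by (simp add: h_def)
    have hz: "h < z" using dl zp by (simp add: h_def)
    have zh: "z + h = (1 + \<delta>) * z" by (simp add: h_def algebra_simps)
    have "(1 + \<delta>) * z \<le> (1 + \<delta>) * z1" using z dl by (intro mult_left_mono) auto
    also have "\<dots> \<le> (1 + \<delta>) * (\<eta> / (2 * (1 + \<delta>)))" using z1 dl by (intro mult_left_mono) auto
    also have "\<dots> = \<eta> / 2" using dl by (simp add: field_simps)
    finally have w\<eta>: "z + h \<le> \<eta> / 2" using zh by simp
    have z\<eta>: "z \<le> \<eta> / 2" using w\<eta> hp by linarith
    define P where "P = \<rho> ((1 + \<delta>) * z)"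
    have P0: "0 \<le> P" unfolding P_def using nn w\<eta> zh \<eta> zp hp by auto
    have near: "integral {0..z + h} (f z r) \<le> P * (G z r (z + h) - G z r 0) + 0"
    proof (rule near_ub[OF rp])
      show "0 \<le> (0::real)" "0 \<le> z + h" "z + h \<le> L" using zp hp w\<eta> \<eta> by auto
      show "((\<lambda>_. 0) has_integral 0) {0..z + h}" by simp
      fix \<zeta> assume \<zeta>: "\<zeta> \<in> {0..z + h}"
      have "\<rho> \<zeta> \<le> P" unfolding P_def
        using \<zeta> zh w\<eta> \<eta> zp hp by (intro mono_onD[OF mono]) auto
      then show "\<rho> \<zeta> / sqrt ((\<zeta> - z)^2 + r^2) \<le> P / sqrt ((\<zeta> - z)^2 + r^2) + 0"
        using s_pos[OF rp, of "\<zeta> - z"] by (simp add: divide_right_mono)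
    qed
    have g: "G z r (z + h) - G z r 0 \<le> - 2 * ln r"
      by (rule G_ub[OF zp hp rp]) (use hz z1 z r4 in auto)
    have near2: "integral {0..z + h} (f z r) \<le> 2 * P * (- ln r)"
    proof -
      have "P * (G z r (z + h) - G z r 0) \<le> P * (- 2 * ln r)" using g P0 by (intro mult_left_mono) auto
      then show ?thesis using near by simp
    qed
    have far: "integral {z+h..L} (f z r) \<le> ((z + h) / h) * I \<eta> + (\<eta> / (\<eta> - z)) * V0"
      by (rule far_ub[OF zp hp _ \<eta>(3) rp]) (use w\<eta> \<eta> in auto)
    have Kz: "(z + h) / h = K" unfolding K_def using zh hp dl zp by (simp add: h_def field_simps)
    have tb: "(\<eta> / (\<eta> - z)) * V0 \<le> V0 + \<epsilon> / 2"
      by (rule tail_bound[OF V0_nn zp z\<eta> e]) (use z z1 in auto)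
    have split: "potential \<rho> L r z = integral {0..z + h} (f z r) + integral {z+h..L} (f z r)"
      by (rule V_split) (use zp hp w\<eta> \<eta> rp in auto)
    show "potential \<rho> L r z \<le> 2 * \<rho> ((1 + \<delta>) * z) * (- ln r) + V0 + \<epsilon>"
    proof -
      have "((z + h) / h) * I \<eta> \<le> \<epsilon> / 2" using Kz I\<eta> by simp
      then show ?thesis using split near2 far tb unfolding P_def by linarith
    qed
  qed
  have q4: "(0::real) < 1 / 4" by simp
  show ?thesis using main z1(1) q4 by blast
qed

end

context pot
begin

lemma a_LB:
  assumes b: "0 < b" "b \<le> L" and mono: "mono_on {0..b} \<rho>" and dl: "0 < \<delta>" "\<delta> < 1" and e: "0 < \<epsilon>"
    and r0: "\<rho> 0 = 0"
  shows "\<exists>z1>0. \<exists>r1>0. \<forall>z\<in>{0<..z1}. \<forall>r\<in>{0<..r1}.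
           potential \<rho> L r z \<ge> 2 * \<rho> ((1 - \<delta>) * z) * (- ln r) + V0 - \<epsilon>"
proof -
  obtain \<eta>0 where \<eta>0: "\<eta>0 > 0" "\<eta>0 \<le> L" and I\<eta>0: "\<forall>t\<in>{0..\<eta>0}. I t \<le> \<epsilon> / 3"
    using I_small[of "\<epsilon> / 3"] e by auto
  define \<eta> where "\<eta> = min \<eta>0 b"
  have \<eta>: "0 < \<eta>" "\<eta> \<le> b" "\<eta> \<le> L" "\<eta> \<le> \<eta>0" unfolding \<eta>_def using \<eta>0 b by linarith+
  have I\<eta>: "I \<eta> \<le> \<epsilon> / 3" using I\<eta>0 \<eta> by auto
  have e12: "0 < \<epsilon> / 12" using e by simp
  obtain t0 where t0: "t0 > 0" and lt0: "\<forall>t\<in>{0<..t0}. \<rho> t * ln (1 / t) \<le> \<epsilon> / 12"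
  proof -
    have "\<exists>t0>0. \<forall>t\<in>{0<..t0}. \<rho> t * ln (1 / t) \<le> \<epsilon> / 12"
    proof (rule log_small[OF b(1) _ _ _ e12])
      show "\<And>x y. x \<in> {0..b} \<Longrightarrow> y \<in> {0..b} \<Longrightarrow> x \<le> y \<Longrightarrow> \<rho> x \<le> \<rho> y"
        using mono by (rule mono_onD)
      show "\<And>x. x \<in> {0..b} \<Longrightarrow> 0 \<le> \<rho> x" using nn b by auto
      show "(\<lambda>t. \<rho> t / t) integrable_on {0..b}" using b by (intro q_int) auto
    qed
    then show ?thesis using that by blast
  qed
  define C where "C = \<bar>ln (\<delta> / (1 - \<delta>))\<bar>"
  have C: "0 \<le> C" by (simp add: C_def)
  have eC: "0 < \<epsilon> / (12 * (C + 1))" using e C by simp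
  obtain t1 where t1: "t1 > 0" "t1 \<le> L" and rt1: "\<forall>t\<in>{0..t1}. \<rho> t \<le> \<epsilon> / (12 * (C + 1))"
    using cont_small[OF cont r0 L eC] by blast
  define z1 where "z1 = min (\<eta> / 2) (min t0 t1)"
  have z1: "0 < z1" "z1 \<le> \<eta> / 2" "z1 \<le> t0" "z1 \<le> t1"
  proof -
    show "0 < z1" unfolding z1_def using \<eta> t0 t1 by simp
    show "z1 \<le> \<eta> / 2" unfolding z1_def by (rule min.cobounded1)
    show "z1 \<le> t0" unfolding z1_def by (rule min.coboundedI2, rule min.cobounded1)
    show "z1 \<le> t1" unfolding z1_def by (rule min.coboundedI2, rule min.cobounded2)
  qed
  define r1 where "r1 = \<eta> * \<epsilon> / (3 * (V0 + 1))"
  have V0p: "V0 + 1 > 0" using V0_nn by linarith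
  have r1: "0 < r1" unfolding r1_def using \<eta> e V0p by simp
  have main: "\<forall>z\<in>{0<..z1}. \<forall>r\<in>{0<..r1}.
           potential \<rho> L r z \<ge> 2 * \<rho> ((1 - \<delta>) * z) * (- ln r) + V0 - \<epsilon>"
  proof (intro ballI)
    fix z r assume z: "z \<in> {0<..z1}" and r: "r \<in> {0<..r1}"
    have zp: "0 < z" and rp: "0 < r" and rr1: "r \<le> r1" and zz1: "z \<le> z1" using z r by auto
    define h where "h = \<delta> * z"
    define t where "t = (1 - \<delta>) * z"
    have hp: "0 < h" using dl zp by (simp add: h_def)
    have tp: "0 < t" using dl zp by (simp add: t_def)
    have tz: "t = z - h" by (simp add: t_def h_def algebra_simps)
    have tle: "t \<le> z" using tz hp by linarith
    have hz: "h < z" using dl zp by (simp add: h_def)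
    have zh\<eta>: "z + h \<le> \<eta>" using hz zz1 z1 by linarith
    define Q where "Q = \<rho> t"
    have Q0: "0 \<le> Q" unfolding Q_def using nn tp tle zh\<eta> \<eta> hp by auto
    have near: "integral {z - h..z + h} (f z r) \<ge> Q * (G z r (z + h) - G z r (z - h)) - 0"
    proof (rule near_lb[OF rp])
      show "0 \<le> z - h" "z - h \<le> z + h" "z + h \<le> L" using hz hp zh\<eta> \<eta> by auto
      show "((\<lambda>_. 0) has_integral 0) {z - h..z + h}" by simp
      fix \<zeta> assume \<zeta>: "\<zeta> \<in> {z - h..z + h}"
      have "Q \<le> \<rho> \<zeta>" unfolding Q_def tz
        using \<zeta> zh\<eta> \<eta> hz by (intro mono_onD[OF mono]) auto
      then show "Q / sqrt ((\<zeta> - z)^2 + r^2) - 0 \<le> \<rho> \<zeta> / sqrt ((\<zeta> - z)^2 + r^2)"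
        using s_pos[OF rp, of "\<zeta> - z"] by (simp add: divide_right_mono)
    qed
    have g: "G z r (z + h) - G z r (z - h) \<ge> 2 * ln h - 2 * ln r" by (rule G_lb[OF hp rp])
    have near2: "integral {z - h..z + h} (f z r) \<ge> 2 * Q * (- ln r) + 2 * Q * ln h"
    proof -
      have "Q * (2 * ln h - 2 * ln r) \<le> Q * (G z r (z + h) - G z r (z - h))"
        using g Q0 by (intro mult_left_mono) auto
      then show ?thesis using near by (simp add: algebra_simps)
    qed
    have far: "integral {\<eta>..L} (f z r) \<ge> (V0 - I \<eta>) * (\<eta> / (\<eta> + r))"
      by (rule far_lb) (use zp zh\<eta> hp \<eta> rp in auto)
    have I0: "0 \<le> I \<eta>" using \<eta> by (intro I_nn) auto
    have IV: "I \<eta> \<le> V0" unfolding I_def using \<eta> by (intro sub_le_V0) auto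
    have tb: "(V0 - I \<eta>) * (\<eta> / (\<eta> + r)) \<ge> V0 - I \<eta> - \<epsilon> / 3"
      by (rule tail_bound2[OF I0 IV rp \<eta>(1) e]) (use rr1 r1_def in auto)
    have lb: "potential \<rho> L r z \<ge> integral {z - h..z + h} (f z r) + integral {\<eta>..L} (f z r)"
      by (rule V_lb) (use hz hp zh\<eta> \<eta> rp in auto)
    have hl: "2 * Q * ln h \<ge> - \<epsilon> / 3"
    proof -
      have ht: "h = t * (\<delta> / (1 - \<delta>))" using dl by (simp add: h_def t_def field_simps)
      have lnh: "ln h = ln t + ln (\<delta> / (1 - \<delta>))"
        unfolding ht using tp dl by (intro ln_mult_pos) auto
      have a1: "Q * ln (1 / t) \<le> \<epsilon> / 12" unfolding Q_def using lt0 tp tle zz1 z1 by auto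
      have lt: "ln (1 / t) = - ln t" using tp by (simp add: ln_div)
      have Qs: "Q \<le> \<epsilon> / (12 * (C + 1))" unfolding Q_def using rt1 tp tle zz1 z1 by auto
      have "Q * (C + 1) \<le> \<epsilon> / (12 * (C + 1)) * (C + 1)" using Qs C by (intro mult_right_mono) auto
      moreover have "\<epsilon> / (12 * (C + 1)) * (C + 1) = \<epsilon> / 12"
      proof -
        have "C + 1 \<noteq> 0" using C by linarith
        then show ?thesis by (simp add: field_simps)
      qed
      ultimately have QC1: "Q * (C + 1) \<le> \<epsilon> / 12" by linarith
      have QC: "Q * C \<le> \<epsilon> / 12" using QC1 Q0 by (simp add: algebra_simps)
      have "- C \<le> ln (\<delta> / (1 - \<delta>))" unfolding C_def by linarith
      then have "Q * (- C) \<le> Q * ln (\<delta> / (1 - \<delta>))" using Q0 by (intro mult_left_mono) auto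
      then have a2: "- (\<epsilon> / 12) \<le> Q * ln (\<delta> / (1 - \<delta>))" using QC by simp
      have "Q * ln h = Q * ln t + Q * ln (\<delta> / (1 - \<delta>))" using lnh by (simp add: algebra_simps)
      moreover have "Q * ln t \<ge> - (\<epsilon> / 12)" using a1 lt by simp
      ultimately show ?thesis using a2 by linarith
    qed
    show "potential \<rho> L r z \<ge> 2 * \<rho> ((1 - \<delta>) * z) * (- ln r) + V0 - \<epsilon>"
      using lb near2 far tb hl I\<eta> unfolding Q_def t_def by linarith
  qed
  show ?thesis using main z1(1) r1 by blast
qed

end

context pot
begin

lemma b_near:
  assumes b: "0 < b" "b \<le> L" and cb: "continuous_on {0..b} \<rho>"
    and oi: "(\<lambda>t. modulus_of_continuity 0 b \<rho> t / t) integrable_on {0..1}"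
    and z: "0 < z" "2 * z \<le> b" "z \<le> 1" and r: "0 < r"
  shows "integral {0..2 * z} (f z r) \<le> \<rho> z * (G z r (2 * z) - G z r 0)
            + 2 * integral {0..z} (\<lambda>t. modulus_of_continuity 0 b \<rho> t / t)"
    and "integral {0..2 * z} (f z r) \<ge> \<rho> z * (G z r (2 * z) - G z r 0)
            - 2 * integral {0..z} (\<lambda>t. modulus_of_continuity 0 b \<rho> t / t)"
proof -
  let ?w = "modulus_of_continuity 0 b \<rho>"
  let ?J = "integral {0..z} (\<lambda>t. ?w t / t)"
  have gi: "((\<lambda>t. ?w t / t) has_integral ?J) {0..z}"
    by (rule integrable_integral, rule integrable_on_subinterval[OF oi]) (use z in auto)
  have e0: "((\<lambda>\<zeta>. ?w \<bar>\<zeta> - z\<bar> / \<bar>\<zeta> - z\<bar>) has_integral 2 * ?J) {z - z..z + z}"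
    by (rule sym_int[OF _ gi]) (use z in linarith)
  have i1: "z - z = 0" by simp
  have i2: "z + z = 2 * z" by simp
  have e: "((\<lambda>\<zeta>. ?w \<bar>\<zeta> - z\<bar> / \<bar>\<zeta> - z\<bar>) has_integral 2 * ?J) {0..2 * z}"
    using e0 unfolding i1 i2 .
  have pw: "\<rho> \<zeta> / sqrt ((\<zeta> - z)^2 + r^2) \<le> \<rho> z / sqrt ((\<zeta> - z)^2 + r^2) + ?w \<bar>\<zeta> - z\<bar> / \<bar>\<zeta> - z\<bar>
      \<and> \<rho> z / sqrt ((\<zeta> - z)^2 + r^2) - ?w \<bar>\<zeta> - z\<bar> / \<bar>\<zeta> - z\<bar> \<le> \<rho> \<zeta> / sqrt ((\<zeta> - z)^2 + r^2)"
    if \<zeta>: "\<zeta> \<in> {0..2 * z}" for \<zeta>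
  proof (cases "\<zeta> = z")
    case True then show ?thesis by (simp only: diff_self abs_zero div_by_0 add_0_right diff_0_right order_refl conj_absorb)
  next
    case False
    have d: "0 < \<bar>\<zeta> - z\<bar>" using False by simp
    have ds: "\<bar>\<zeta> - z\<bar> \<le> sqrt ((\<zeta> - z)^2 + r^2)" by (rule s_ge)
    have pq: "\<bar>\<rho> \<zeta> - \<rho> z\<bar> \<le> ?w \<bar>\<zeta> - z\<bar>"
      by (rule om_ge[OF b(1) cb]) (use \<zeta> z in auto)
    show ?thesis using ar4[OF d ds pq] by (simp only:)
  qed
  have zL: "2 * z \<le> L" using z b by linarith
  show "integral {0..2 * z} (f z r) \<le> \<rho> z * (G z r (2 * z) - G z r 0) + 2 * ?J"
  proof (rule near_ub[OF r _ _ zL e])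
    show "0 \<le> (0::real)" by simp
    show "0 \<le> 2 * z" using z by simp
    fix \<zeta> assume "\<zeta> \<in> {0..2 * z}"
    then show "\<rho> \<zeta> / sqrt ((\<zeta> - z)^2 + r^2) \<le> \<rho> z / sqrt ((\<zeta> - z)^2 + r^2) + ?w \<bar>\<zeta> - z\<bar> / \<bar>\<zeta> - z\<bar>"
      using pw by blast
  qed
  show "integral {0..2 * z} (f z r) \<ge> \<rho> z * (G z r (2 * z) - G z r 0) - 2 * ?J"
  proof (rule near_lb[OF r _ _ zL e])
    show "0 \<le> (0::real)" by simp
    show "0 \<le> 2 * z" using z by simp
    fix \<zeta> assume "\<zeta> \<in> {0..2 * z}"
    then show "\<rho> z / sqrt ((\<zeta> - z)^2 + r^2) - ?w \<bar>\<zeta> - z\<bar> / \<bar>\<zeta> - z\<bar> \<le> \<rho> \<zeta> / sqrt ((\<zeta> - z)^2 + r^2)"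
      using pw by blast
  qed
qed

end

context pot
begin

lemma b_UB:
  assumes b: "0 < b" "b \<le> L" and cb: "continuous_on {0..b} \<rho>"
    and oi: "(\<lambda>t. modulus_of_continuity 0 b \<rho> t / t) integrable_on {0..1}" and e: "0 < \<epsilon>"
  shows "\<exists>z1>0. \<exists>r1>0. \<forall>z\<in>{0<..z1}. \<forall>r\<in>{0<..r1}.
           potential \<rho> L r z \<le> 2 * \<rho> z * (- ln r) + V0 + \<epsilon>"
proof -
  let ?w = "modulus_of_continuity 0 b \<rho>"
  have e8: "0 < \<epsilon> / 8" using e by simp
  obtain x0 where x0: "x0 > 0" "x0 \<le> 1" and Jx0: "\<forall>t\<in>{0..x0}. integral {0..t} (\<lambda>t. ?w t / t) \<le> \<epsilon> / 8"
    using int_small[OF oi zero_less_one e8] by blast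
  obtain \<eta>0 where \<eta>0: "\<eta>0 > 0" "\<eta>0 \<le> L" and I\<eta>0: "\<forall>t\<in>{0..\<eta>0}. I t \<le> \<epsilon> / 8"
    using I_small[OF e8] by auto
  define \<eta> where "\<eta> = min \<eta>0 b"
  have \<eta>: "0 < \<eta>" "\<eta> \<le> b" "\<eta> \<le> L" "\<eta> \<le> \<eta>0" unfolding \<eta>_def using \<eta>0 b by linarith+
  have I\<eta>: "I \<eta> \<le> \<epsilon> / 8" using I\<eta>0 \<eta> by simp
  have V0p: "V0 + 1 > 0" using V0_nn by linarith
  define z1 where "z1 = min (\<eta> / 4) (min (1 / 4) (min x0 (\<eta> * \<epsilon> / (4 * (V0 + 1)))))"
  have z1: "0 < z1" "z1 \<le> \<eta> / 4" "z1 \<le> 1 / 4" "z1 \<le> x0" "z1 \<le> \<eta> * \<epsilon> / (4 * (V0 + 1))"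
  proof -
    have "0 < \<eta> * \<epsilon> / (4 * (V0 + 1))" using \<eta> e V0p by simp
    then show "0 < z1" unfolding z1_def using \<eta> x0 by simp
    show "z1 \<le> \<eta> / 4" unfolding z1_def by (rule min.cobounded1)
    show "z1 \<le> 1 / 4" unfolding z1_def by (rule min.coboundedI2, rule min.cobounded1)
    show "z1 \<le> x0" unfolding z1_def by (rule min.coboundedI2, rule min.coboundedI2, rule min.cobounded1)
    show "z1 \<le> \<eta> * \<epsilon> / (4 * (V0 + 1))" unfolding z1_def
      by (rule min.coboundedI2, rule min.coboundedI2, rule min.cobounded2)
  qed
  have main: "\<forall>z\<in>{0<..z1}. \<forall>r\<in>{0<..1 / 4::real}.
           potential \<rho> L r z \<le> 2 * \<rho> z * (- ln r) + V0 + \<epsilon>"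
  proof (intro ballI)
    fix z r assume z: "z \<in> {0<..z1}" and r: "r \<in> {0<..1 / 4::real}"
    have zp: "0 < z" and rp: "0 < r" and r4: "r \<le> 1 / 4" and zz1: "z \<le> z1" using z r by auto
    have z2\<eta>: "2 * z \<le> \<eta> / 2" using zz1 z1 by linarith
    have zb: "2 * z \<le> b" using z2\<eta> \<eta> by linarith
    have z1': "z \<le> 1" using zz1 z1 by linarith
    have nb: "integral {0..2 * z} (f z r) \<le> \<rho> z * (G z r (2 * z) - G z r 0)
            + 2 * integral {0..z} (\<lambda>t. ?w t / t)"
      by (rule b_near(1)[OF b cb oi zp zb z1' rp])
    have zx0: "z \<in> {0..x0}" using zp zz1 z1 by simp
    have J: "integral {0..z} (\<lambda>t. ?w t / t) \<le> \<epsilon> / 8" using Jx0 zx0 by blast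
    have g0: "G z r (z + z) - G z r 0 \<le> - 2 * ln r"
      by (rule G_ub[OF zp zp rp]) (use zz1 z1(3) r4 in linarith)+
    have g: "G z r (2 * z) - G z r 0 \<le> - 2 * ln r" using g0 by (simp only: mult_2)
    have P0: "0 \<le> \<rho> z" using nn zp zb b by auto
    have near2: "integral {0..2 * z} (f z r) \<le> 2 * \<rho> z * (- ln r) + \<epsilon> / 4"
    proof -
      have "\<rho> z * (G z r (2 * z) - G z r 0) \<le> \<rho> z * (- 2 * ln r)" using g P0 by (intro mult_left_mono) auto
      then show ?thesis using nb J by simp
    qed
    have far0: "integral {z + z..L} (f z r) \<le> ((z + z) / z) * I \<eta> + (\<eta> / (\<eta> - z)) * V0"
      by (rule far_ub[OF zp zp _ \<eta>(3) rp]) (use z2\<eta> \<eta> in auto)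
    have far: "integral {2 * z..L} (f z r) \<le> 2 * I \<eta> + (\<eta> / (\<eta> - z)) * V0"
    proof -
      have zz: "(z + z) / z = 2" using zp by simp
      show ?thesis using far0 by (simp only: mult_2 zz)
    qed
    have z\<eta>: "z \<le> \<eta> / 2" using z2\<eta> zp by linarith
    have tb: "(\<eta> / (\<eta> - z)) * V0 \<le> V0 + \<epsilon> / 2"
      by (rule tail_bound[OF V0_nn zp z\<eta> e]) (use zz1 z1(5) in linarith)
    have split: "potential \<rho> L r z = integral {0..2 * z} (f z r) + integral {2 * z..L} (f z r)"
      by (rule V_split) (use zp z2\<eta> \<eta> rp in auto)
    show "potential \<rho> L r z \<le> 2 * \<rho> z * (- ln r) + V0 + \<epsilon>"
      using split near2 far tb I\<eta> by linarith
  qed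
  have q4: "(0::real) < 1 / 4" by simp
  show ?thesis using main z1(1) q4 by blast
qed

lemma b_LB:
  assumes b: "0 < b" "b \<le> L" and cb: "continuous_on {0..b} \<rho>"
    and oi: "(\<lambda>t. modulus_of_continuity 0 b \<rho> t / t) integrable_on {0..1}" and e: "0 < \<epsilon>"
    and r0: "\<rho> 0 = 0"
  shows "\<exists>z1>0. \<exists>r1>0. \<forall>z\<in>{0<..z1}. \<forall>r\<in>{0<..r1}.
           potential \<rho> L r z \<ge> 2 * \<rho> z * (- ln r) + V0 - \<epsilon>"
proof -
  let ?w = "modulus_of_continuity 0 b \<rho>"
  have e8: "0 < \<epsilon> / 8" using e by simp
  have e6: "0 < \<epsilon> / 6" using e by simp
  obtain x0 where x0: "x0 > 0" "x0 \<le> 1" and Jx0: "\<forall>t\<in>{0..x0}. integral {0..t} (\<lambda>t. ?w t / t) \<le> \<epsilon> / 8"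
    using int_small[OF oi zero_less_one e8] by blast
  obtain \<eta>0 where \<eta>0: "\<eta>0 > 0" "\<eta>0 \<le> L" and I\<eta>0: "\<forall>t\<in>{0..\<eta>0}. I t \<le> \<epsilon> / 6"
    using I_small[OF e6] by auto
  obtain t0 where t0: "t0 > 0" and lt0: "\<forall>t\<in>{0<..t0}. ?w t * ln (1 / t) \<le> \<epsilon> / 8"
  proof -
    have "\<exists>t0>0. \<forall>t\<in>{0<..t0}. ?w t * ln (1 / t) \<le> \<epsilon> / 8"
    proof (rule log_small[OF zero_less_one _ _ oi e8])
      show "\<And>x y. x \<in> {0..1} \<Longrightarrow> y \<in> {0..1} \<Longrightarrow> x \<le> y \<Longrightarrow> ?w x \<le> ?w y"
        using om_mono[OF b(1) cb] by auto
      show "\<And>x. x \<in> {0..1} \<Longrightarrow> 0 \<le> ?w x" using om_nn[OF b(1) cb] by auto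
    qed
    then show ?thesis using that by blast
  qed
  define \<eta> where "\<eta> = min \<eta>0 b"
  have \<eta>: "0 < \<eta>" "\<eta> \<le> b" "\<eta> \<le> L" "\<eta> \<le> \<eta>0" unfolding \<eta>_def using \<eta>0 b by linarith+
  have I\<eta>: "I \<eta> \<le> \<epsilon> / 6" using I\<eta>0 \<eta> by simp
  have V0p: "V0 + 1 > 0" using V0_nn by linarith
  define z1 where "z1 = min (\<eta> / 2) (min x0 t0)"
  have z1: "0 < z1" "z1 \<le> \<eta> / 2" "z1 \<le> x0" "z1 \<le> t0"
  proof -
    show "0 < z1" unfolding z1_def using \<eta> x0 t0 by simp
    show "z1 \<le> \<eta> / 2" unfolding z1_def by (rule min.cobounded1)
    show "z1 \<le> x0" unfolding z1_def by (rule min.coboundedI2, rule min.cobounded1)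
    show "z1 \<le> t0" unfolding z1_def by (rule min.coboundedI2, rule min.cobounded2)
  qed
  define r1 where "r1 = \<eta> * \<epsilon> / (3 * (V0 + 1))"
  have r1: "0 < r1" unfolding r1_def using \<eta> e V0p by simp
  have main: "\<forall>z\<in>{0<..z1}. \<forall>r\<in>{0<..r1}.
           potential \<rho> L r z \<ge> 2 * \<rho> z * (- ln r) + V0 - \<epsilon>"
  proof (intro ballI)
    fix z r assume z: "z \<in> {0<..z1}" and r: "r \<in> {0<..r1}"
    have zp: "0 < z" and rp: "0 < r" and rr1: "r \<le> r1" and zz1: "z \<le> z1" using z r by auto
    have z2\<eta>: "2 * z \<le> \<eta>" using zz1 z1 by linarith
    have zb: "2 * z \<le> b" using z2\<eta> \<eta> by linarith
    have z1': "z \<le> 1" using zz1 z1 x0 by linarith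
    have nb: "integral {0..2 * z} (f z r) \<ge> \<rho> z * (G z r (2 * z) - G z r 0)
            - 2 * integral {0..z} (\<lambda>t. ?w t / t)"
      by (rule b_near(2)[OF b cb oi zp zb z1' rp])
    have zx0: "z \<in> {0..x0}" using zp zz1 z1 by simp
    have J: "integral {0..z} (\<lambda>t. ?w t / t) \<le> \<epsilon> / 8" using Jx0 zx0 by blast
    have g0: "G z r (z + z) - G z r (z - z) \<ge> 2 * ln z - 2 * ln r" by (rule G_lb[OF zp rp])
    have g: "G z r (2 * z) - G z r 0 \<ge> 2 * ln z - 2 * ln r" using g0 by (simp only: mult_2 diff_self)
    have P0: "0 \<le> \<rho> z" using nn zp zb b by auto
    have near2: "integral {0..2 * z} (f z r) \<ge> 2 * \<rho> z * (- ln r) + 2 * \<rho> z * ln z - \<epsilon> / 4"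
    proof -
      have "\<rho> z * (2 * ln z - 2 * ln r) \<le> \<rho> z * (G z r (2 * z) - G z r 0)"
        using g P0 by (intro mult_left_mono) auto
      then show ?thesis using nb J by (simp add: algebra_simps)
    qed
    have far: "integral {\<eta>..L} (f z r) \<ge> (V0 - I \<eta>) * (\<eta> / (\<eta> + r))"
      by (rule far_lb) (use zp z2\<eta> \<eta> rp in auto)
    have I0: "0 \<le> I \<eta>" using \<eta> by (intro I_nn) auto
    have IV: "I \<eta> \<le> V0" unfolding I_def using \<eta> by (intro sub_le_V0) auto
    have tb: "(V0 - I \<eta>) * (\<eta> / (\<eta> + r)) \<ge> V0 - I \<eta> - \<epsilon> / 3"
      by (rule tail_bound2[OF I0 IV rp \<eta>(1) e]) (use rr1 r1_def in auto)
    have lb: "potential \<rho> L r z \<ge> integral {0..2 * z} (f z r) + integral {\<eta>..L} (f z r)"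
      by (rule V_lb) (use zp z2\<eta> \<eta> rp in auto)
    have hl: "2 * \<rho> z * ln z \<ge> - \<epsilon> / 4"
    proof -
      have lz: "ln (1 / z) = - ln z" using zp by (simp add: ln_div)
      have lz0: "0 \<le> ln (1 / z)" using zp z1' by simp
      have "\<bar>\<rho> z - \<rho> 0\<bar> \<le> ?w \<bar>z - 0\<bar>" by (rule om_ge[OF b(1) cb]) (use zp zb in auto)
      then have rw: "\<rho> z \<le> ?w z" using r0 zp P0 by simp
      have "\<rho> z * ln (1 / z) \<le> ?w z * ln (1 / z)" using rw lz0 by (intro mult_right_mono) auto
      also have "\<dots> \<le> \<epsilon> / 8"
      proof -
        have "z \<in> {0<..t0}" using zp zz1 z1 by simp
        then show ?thesis using lt0 by blast
      qed
      finally have "\<rho> z * ln (1 / z) \<le> \<epsilon> / 8" .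
      then show ?thesis using lz by simp
    qed
    show "potential \<rho> L r z \<ge> 2 * \<rho> z * (- ln r) + V0 - \<epsilon>"
      using lb near2 far tb hl I\<eta> by linarith
  qed
  show ?thesis using main z1(1) r1 by blast
qed

end

theorem corollary4p6:
  fixes \<rho> rc :: "real \<Rightarrow> real" and L c z2 \<alpha> \<beta> :: real
  assumes L_pos: "L > 0"
    and \<rho>_cont: "continuous_on {0..L} \<rho>"
    and \<rho>_nonneg: "\<forall>x\<in>{0..L}. \<rho> x \<ge> 0"
    and \<rho>_0: "\<rho> 0 = 0"
    and \<rho>_pos: "\<forall>x\<in>{0<..L}. \<rho> x > 0"
    and V00_fin: "(\<lambda>\<zeta>. \<rho> \<zeta> / \<zeta>) integrable_on {0..L}"
    and c_gt: "c > potential \<rho> L 0 0"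
    and z2_gt: "z2 > L"
    and rc_cont: "continuous_on {0..z2} rc"
    and rc_nonneg: "\<forall>z\<in>{0..z2}. rc z \<ge> 0"
    and rc_ends: "rc 0 = 0" "rc z2 = 0"
    and rc_pos: "\<forall>z\<in>{0<..<z2}. rc z > 0"
    and rc_level: "{(r, z). r \<ge> 0 \<and> (r > 0 \<or> z \<notin> {0..L}) \<and> potential \<rho> L r z = c} \<union> {(0, 0)}
                   = (\<lambda>z. (rc z, z)) ` {0..z2}"
    and \<alpha>_pos: "0 < \<alpha>"
    and \<alpha>_lt: "\<alpha> < (c - potential \<rho> L 0 0) / 2"
    and \<beta>_gt: "(c - potential \<rho> L 0 0) / 2 < \<beta>"
  shows "(\<forall>b. 0 < b \<and> b \<le> L \<and> mono_on {0..b} \<rho> \<longrightarrow>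
            (\<forall>\<delta>. 0 < \<delta> \<and> \<delta> < 1 \<longrightarrow>
               (\<exists>z0\<in>{0<..L}. \<forall>z\<in>{0<..z0}.
                  exp (- \<beta> / \<rho> ((1 - \<delta>) * z)) < rc z \<and>
                  rc z < exp (- \<alpha> / \<rho> ((1 + \<delta>) * z)))))
       \<and> (\<forall>b. 0 < b \<and> b \<le> L \<and> dini_continuous_on 0 b \<rho> \<longrightarrow>
            (\<exists>z0\<in>{0<..L}. \<forall>z\<in>{0<..z0}.
               exp (- \<beta> / \<rho> z) < rc z \<and> rc z < exp (- \<alpha> / \<rho> z)))"
proof -
  interpret P: pot \<rho> L
    using L_pos \<rho>_cont \<rho>_nonneg V00_fin by unfold_locales
  have V0: "potential \<rho> L 0 0 = P.V0" by (rule P.pot00)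
  have al: "0 < \<alpha>" "\<alpha> < (c - P.V0) / 2" using \<alpha>_pos \<alpha>_lt V0 by simp_all
  have be: "(c - P.V0) / 2 < \<beta>" using \<beta>_gt V0 by simp
  have rc0: "rc 0 = 0" using rc_ends by simp
  have lev: "\<forall>z\<in>{0<..<z2}. potential \<rho> L (rc z) z = c"
  proof
    fix z assume z: "z \<in> {0<..<z2}"
    then have "(rc z, z) \<in> (\<lambda>z. (rc z, z)) ` {0..z2}" by auto
    then have "(rc z, z) \<in> {(r, z). r \<ge> 0 \<and> (r > 0 \<or> z \<notin> {0..L}) \<and> potential \<rho> L r z = c} \<union> {(0, 0)}"
      using rc_level by simp
    moreover have "(rc z, z) \<noteq> (0, 0)" using z by simp
    ultimately show "potential \<rho> L (rc z) z = c" by blast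
  qed
  show ?thesis
  proof (intro conjI allI impI)
    fix b \<delta> :: real assume b: "0 < b \<and> b \<le> L \<and> mono_on {0..b} \<rho>" and dl: "0 < \<delta> \<and> \<delta> < 1"
    have PQ: "\<exists>z1>0. \<forall>z\<in>{0<..z1}. \<rho> ((1 + \<delta>) * z) > 0 \<and> \<rho> ((1 - \<delta>) * z) > 0"
    proof (intro exI[of _ "L / 2"] conjI ballI)
      show "0 < L / 2" using L_pos by simp
      fix z assume z: "z \<in> {0<..L / 2}"
      have "(1 + \<delta>) * z \<le> 2 * z" using dl z by (intro mult_right_mono) auto
      moreover have "0 < (1 + \<delta>) * z" using z dl by simp
      moreover have "z \<le> L / 2" using z by simp
      ultimately have "(1 + \<delta>) * z \<in> {0<..L}" by simp
      then show "\<rho> ((1 + \<delta>) * z) > 0" using \<rho>_pos by blast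
      have "(1 - \<delta>) * z \<le> z" using dl z by (simp add: algebra_simps)
      moreover have "0 < (1 - \<delta>) * z" using z dl by simp
      moreover have "z \<le> L / 2" using z by simp
      ultimately have "(1 - \<delta>) * z \<in> {0<..L}" using L_pos by simp
      then show "\<rho> ((1 - \<delta>) * z) > 0" using \<rho>_pos by blast
    qed
    show "\<exists>z0\<in>{0<..L}. \<forall>z\<in>{0<..z0}.
            exp (- \<beta> / \<rho> ((1 - \<delta>) * z)) < rc z \<and> rc z < exp (- \<alpha> / \<rho> ((1 + \<delta>) * z))"
    proof (rule P.final[OF al be z2_gt rc_cont rc0 rc_pos lev _ _ PQ])
      fix \<epsilon> :: real assume e: "0 < \<epsilon>"
      show "\<exists>z1>0. \<exists>r1>0. \<forall>z\<in>{0<..z1}. \<forall>r\<in>{0<..r1}.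
               potential \<rho> L r z \<le> 2 * \<rho> ((1 + \<delta>) * z) * (- ln r) + P.V0 + \<epsilon>"
        using P.a_UB[of b \<delta> \<epsilon>] b dl e by blast
      show "\<exists>z1>0. \<exists>r1>0. \<forall>z\<in>{0<..z1}. \<forall>r\<in>{0<..r1}.
               potential \<rho> L r z \<ge> 2 * \<rho> ((1 - \<delta>) * z) * (- ln r) + P.V0 - \<epsilon>"
        using P.a_LB[of b \<delta> \<epsilon>] b dl e \<rho>_0 by blast
    qed
  next
    fix b :: real assume b: "0 < b \<and> b \<le> L \<and> dini_continuous_on 0 b \<rho>"
    have cb: "continuous_on {0..b} \<rho>" and oi: "(\<lambda>t. modulus_of_continuity 0 b \<rho> t / t) integrable_on {0..1}"
      using b unfolding dini_continuous_on_def by auto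
    have PQ: "\<exists>z1>0. \<forall>z\<in>{0<..z1}. \<rho> z > 0 \<and> \<rho> z > 0"
      using \<rho>_pos L_pos by blast
    show "\<exists>z0\<in>{0<..L}. \<forall>z\<in>{0<..z0}. exp (- \<beta> / \<rho> z) < rc z \<and> rc z < exp (- \<alpha> / \<rho> z)"
    proof (rule P.final[OF al be z2_gt rc_cont rc0 rc_pos lev _ _ PQ])
      fix \<epsilon> :: real assume e: "0 < \<epsilon>"
      show "\<exists>z1>0. \<exists>r1>0. \<forall>z\<in>{0<..z1}. \<forall>r\<in>{0<..r1}.
               potential \<rho> L r z \<le> 2 * \<rho> z * (- ln r) + P.V0 + \<epsilon>"
        using P.b_UB[OF _ _ cb oi e] b by blast
      show "\<exists>z1>0. \<exists>r1>0. \<forall>z\<in>{0<..z1}. \<forall>r\<in>{0<..r1}.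
               potential \<rho> L r z \<ge> 2 * \<rho> z * (- ln r) + P.V0 - \<epsilon>"
        using P.b_LB[OF _ _ cb oi e \<rho>_0] b by blast
    qed
  qed
qed

end
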